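(* Let $A:\mathbb{C}^n\to\mathbb{C}^m$ be linear with $\lVert A\rVert_{2\to2}\le1$ and $A^*A$ injective, $b\in\mathbb{C}^m$, $\lambda>0$, $g:\mathbb{C}^n\to\mathbb{R}$ closed proper convex, and let $x^\star$ minimize $\frac12\lVert Ax-b\rVert_2^2+\lambda g(x)$. Let $p$ be a real polynomial, and set $$\gamma=\lVert I-p(A^*A)A^*A\rVert_{2\to2},\qquad \delta=\lVert (I-p(A^*A))A^*(Ax^\star-b)\rVert_2,$$ and assume $\gamma<1$. Let $y_0\in\mathbb{C}^n$ be arbitrary and $y_{k+1}=\mathrm{prox}_{\lambda g}\bigl(y_k-p(A^*A)A^*(Ay_k-b)\bigr)$, and $e_k=y_k-x^\star$. Then $\lVert e_{k+1}\rVert_2\le\gamma\lVert e_k\rVert_2+\delta$ for all $k\ge0$, and consequently $$\limsup_{k\to\infty}\lVert y_k-x^\star\rVert_2\le\frac{\delta}{1-\gamma}.$$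
   Context: $\lVert\cdot\rVert_2$ is the Euclidean norm, $A^*$ the adjoint, $\lVert\cdot\rVert_{2\to2}$ the induced operator norm, $p(A^*A)$ the polynomial evaluated at $A^*A$. For a closed proper convex $h$ and $\alpha>0$, $\mathrm{prox}_{\alpha h}(v)=\operatorname{argmin}_x \frac12\lVert x-v\rVert_2^2+\alpha h(x)$. In the paper the hypothesis $\gamma<1$ is asserted to follow from injectivity of $A^*A$ when $p$ is obtained by minimizing $\int_0^1(1-q(z)z)^2dz$ over polynomials of fixed degree. *)

theory Defs
  imports "HOL-Analysis.Analysis" "HOL-Computational_Algebra.Polynomial"
begin

definition adjoint_mat :: "complex^'n^'m \<Rightarrow> complex^'m^'n" where
  "adjoint_mat A = (\<chi> i j. cnj (A $ j $ i))"

fun matpow :: "complex^'n^'n \<Rightarrow> nat \<Rightarrow> complex^'n^'n" where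
  "matpow M 0 = mat 1"
| "matpow M (Suc k) = M ** matpow M k"

definition poly_mat :: "real poly \<Rightarrow> complex^'n^'n \<Rightarrow> complex^'n^'n" where
  "poly_mat p M = (\<Sum>i\<le>degree p. coeff p i *\<^sub>R matpow M i)"

text \<open>Induced 2->2 operator norm of a matrix (norm on complex^'n is Euclidean).\<close>
definition opnorm :: "complex^'n^'m \<Rightarrow> real" where
  "opnorm A = onorm (\<lambda>x. A *v x)"

definition prox :: "real \<Rightarrow> ('a::real_normed_vector \<Rightarrow> real) \<Rightarrow> 'a \<Rightarrow> 'a" where
  "prox alpha h v = (SOME x. \<forall>z. (1/2) * (norm (x - v))\<^sup>2 + alpha * h x
                                 \<le> (1/2) * (norm (z - v))\<^sup>2 + alpha * h z)"

end

theory Submission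
  imports Defs
begin

lemma small_t:
  fixes a c :: real assumes h: "\<And>t. 0<t \<Longrightarrow> t\<le>1 \<Longrightarrow> 0 \<le> a + t*c" shows "0 \<le> a"
proof (rule ccontr)
  assume "\<not> 0 \<le> a"
  hence a: "a < 0" by simp
  define t where "t = min 1 (-a/(\<bar>c\<bar>+1))"
  have "0 < -a/(\<bar>c\<bar>+1)" using a by (intro divide_pos_pos) auto
  hence t0: "0 < t" by (simp add: t_def)
  have t1: "t \<le> 1" by (simp add: t_def)
  have "t * c \<le> t * \<bar>c\<bar>" using t0 by (simp add: mult_left_mono)
  also have "\<dots> \<le> (-a/(\<bar>c\<bar>+1)) * \<bar>c\<bar>" by (rule mult_right_mono) (auto simp: t_def)
  also have "\<dots> < -a" using a by (simp add: field_simps)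
  finally have "a + t*c < 0" by simp
  with h[OF t0 t1] show False by simp
qed

lemma min_char:
  fixes Q g :: "'a::real_vector \<Rightarrow> real"
  assumes cvx: "convex_on UNIV g" and lam: "lam \<ge> 0"
    and mn: "\<And>z. Q u + lam*g u \<le> Q z + lam*g z"
    and qexp: "\<And>t::real. Q (u + t *\<^sub>R d) = Q u + t*L + t^2*C"
  shows "0 \<le> L + lam*(g (u+d) - g u)"
proof (rule small_t[where c=C])
  fix t :: real assume t0: "0<t" and t1: "t\<le>1"
  have eq: "u + t *\<^sub>R d = (1-t) *\<^sub>R u + t *\<^sub>R (u+d)" by (simp add: algebra_simps)
  have "g (u + t *\<^sub>R d) \<le> (1-t) * g u + t * g (u+d)"
    unfolding eq using t0 t1 by (intro convex_onD[OF cvx]) auto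
  hence gle: "lam * (g (u + t *\<^sub>R d) - g u) \<le> lam * (t * (g (u+d) - g u))"
    using lam by (intro mult_left_mono) (auto simp: algebra_simps)
  have "0 \<le> t*L + t^2*C + lam * (g (u + t *\<^sub>R d) - g u)"
    using mn[of "u + t *\<^sub>R d"] qexp[of t] by (simp add: algebra_simps)
  also have "\<dots> \<le> t*L + t^2*C + lam * (t * (g (u+d) - g u))" using gle by simp
  also have "\<dots> = t * (L + lam*(g (u+d) - g u) + t*C)" by (simp add: algebra_simps power2_eq_square)
  finally show "0 \<le> L + lam*(g (u+d) - g u) + t*C" using t0
    by (simp add: zero_le_mult_iff)
qed

lemma adj:
  fixes A :: "complex^'n^'m"
  shows "inner (A *v d) r = inner d (adjoint_mat A *v r)"
  unfolding inner_vec_def matrix_vector_mult_def adjoint_mat_def inner_complex_def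
  apply (simp add: Re_sum Im_sum sum_distrib_left sum_distrib_right sum.distrib[symmetric])
  apply (subst sum.swap)
  apply (intro sum.cong refl)
  apply (simp add: algebra_simps)
  done

lemma prox_exists:
  fixes g :: "'a::euclidean_space \<Rightarrow> real"
  assumes cvx: "convex_on UNIV g" and lam: "lam > 0"
  shows "\<exists>u. \<forall>z. (1/2) * (norm (u - v))\<^sup>2 + lam * g u \<le> (1/2) * (norm (z - v))\<^sup>2 + lam * g z"
proof -
  have cont: "continuous_on UNIV g" using convex_on_continuous[OF open_UNIV cvx] .
  have "sphere v 1 \<noteq> {}" by simp
  then obtain w0 where w0: "w0 \<in> sphere v 1" "\<And>y. y \<in> sphere v 1 \<Longrightarrow> g w0 \<le> g y"
    using continuous_attains_inf[OF compact_sphere _ continuous_on_subset[OF cont]] by blast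
  define c where "c = \<bar>g v - g w0\<bar>"
  have c0: "c \<ge> 0" by (simp add: c_def)
  have lower: "g x \<ge> g v - norm (x - v) * c" if R1: "norm (x - v) \<ge> 1" for x
  proof -
    define R where "R = norm (x - v)"
    have R1': "R \<ge> 1" using R1 by (simp add: R_def)
    define t where "t = 1/R"
    have t0: "0 \<le> t" "t \<le> 1" using R1' by (auto simp: t_def)
    define w where "w = (1-t) *\<^sub>R v + t *\<^sub>R x"
    have "w - v = t *\<^sub>R (x - v)" by (simp add: w_def algebra_simps)
    hence "norm (w - v) = 1" using R1' by (auto simp: t_def R_def)
    hence "w \<in> sphere v 1" by (simp add: dist_norm norm_minus_commute)
    hence m: "g w0 \<le> g w" by (rule w0(2))
    have "g w \<le> (1-t) * g v + t * g x" unfolding w_def using t0 by (intro convex_onD[OF cvx]) auto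
    hence "g w0 \<le> (1-t) * g v + t * g x" using m by simp
    hence "R * g w0 \<le> R * ((1-t) * g v + t * g x)" using R1' by (intro mult_left_mono) auto
    also have "\<dots> = (R - 1) * g v + g x" using R1' by (simp add: t_def field_simps)
    finally have "g x \<ge> g v - R * (g v - g w0)" by (simp add: algebra_simps)
    moreover have "R * (g v - g w0) \<le> R * c" using R1' by (intro mult_left_mono) (auto simp: c_def)
    ultimately show ?thesis by (simp add: R_def)
  qed
  define R0 where "R0 = 2*lam*c + 1"
  define F where "F = (\<lambda>x. (1/2) * (norm (x - v))\<^sup>2 + lam * g x)"
  have Fc: "continuous_on UNIV F" unfolding F_def
    by (intro continuous_intros cont)
  have lc: "0 \<le> lam*c" using c0 lam by simp
  have R00: "R0 \<ge> 1" using lc by (simp add: R0_def mult.commute)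
  have "cball v R0 \<noteq> {}" using R00 by simp
  then obtain u where u: "u \<in> cball v R0" "\<And>y. y \<in> cball v R0 \<Longrightarrow> F u \<le> F y"
    using continuous_attains_inf[OF compact_cball _ continuous_on_subset[OF Fc]] by blast
  have "F u \<le> F z" for z
  proof (cases "norm (z - v) \<le> R0")
    case True
    then show ?thesis by (intro u(2)) (simp add: dist_norm norm_minus_commute)
  next
    case False
    define R where "R = norm (z - v)"
    have RR: "R > R0" using False by (simp add: R_def)
    have R1: "R \<ge> 1" using RR R00 by simp
    have gz: "g z \<ge> g v - R * c" using lower[of z] R1 by (simp add: R_def)
    have "F v \<le> F z"
    proof -
      have "lam * c \<le> R/2" using RR by (simp add: R0_def)
      hence "R * (lam * c) \<le> R * (R/2)" using R1 by (intro mult_left_mono) auto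
      moreover have "lam * (g v - R*c) \<le> lam * g z" using gz lam by (intro mult_left_mono) auto
      ultimately show ?thesis unfolding F_def R_def[symmetric]
        by (simp add: algebra_simps power2_eq_square)
    qed
    moreover have "F u \<le> F v" using u(2)[of v] R00 by simp
    ultimately show ?thesis by simp
  qed
  thus ?thesis unfolding F_def by blast
qed

lemma norm_exp:
  fixes a d :: "'a::real_inner"
  shows "(norm (a + t *\<^sub>R d))\<^sup>2 = (norm a)\<^sup>2 + 2 * t * inner a d + t^2 * (norm d)\<^sup>2"
  unfolding power2_norm_eq_inner by (simp add: inner_add_left inner_add_right inner_commute algebra_simps power2_eq_square)

lemma mv_scaleR: "(M::complex^'n^'m) *v (c *\<^sub>R x) = c *\<^sub>R (M *v x)"
  unfolding matrix_vector_mult_def by (simp add: vec_eq_iff scaleR_sum_right)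

lemma prox_char:
  fixes g :: "'a::euclidean_space \<Rightarrow> real"
  assumes cvx: "convex_on UNIV g" and lam: "lam > 0"
  shows "0 \<le> inner (prox lam g v - v) (z - prox lam g v) + lam*(g z - g (prox lam g v))"
proof -
  let ?u = "prox lam g v"
  have mn: "\<forall>z. (1/2) * (norm (?u - v))\<^sup>2 + lam * g ?u \<le> (1/2) * (norm (z - v))\<^sup>2 + lam * g z"
    unfolding prox_def by (rule someI_ex[OF prox_exists[OF cvx lam]])
  have "0 \<le> inner (?u - v) (z - ?u) + lam*(g (?u + (z - ?u)) - g ?u)"
  proof (rule min_char[where Q="\<lambda>x. (1/2) * (norm (x - v))\<^sup>2" and C="(1/2)*(norm (z - ?u))\<^sup>2", OF cvx])
    show "0 \<le> lam" using lam by simp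
    show "\<And>w. (1/2) * (norm (?u - v))\<^sup>2 + lam * g ?u \<le> (1/2) * (norm (w - v))\<^sup>2 + lam * g w"
      using mn by blast
    fix t :: real
    have eq: "?u + t *\<^sub>R (z - ?u) - v = (?u - v) + t *\<^sub>R (z - ?u)" by (simp add: algebra_simps)
    show "(1/2) * (norm (?u + t *\<^sub>R (z - ?u) - v))\<^sup>2 = (1/2) * (norm (?u - v))\<^sup>2
        + t * inner (?u - v) (z - ?u) + t^2 * ((1/2)*(norm (z - ?u))\<^sup>2)"
      unfolding eq norm_exp by (simp add: algebra_simps)
  qed
  thus ?thesis by simp
qed

lemma nonexp:
  fixes g :: "'a::real_inner \<Rightarrow> real"
  assumes c1: "\<And>z. 0 \<le> inner (u1 - v1) (z - u1) + lam*(g z - g u1)"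
    and c2: "\<And>z. 0 \<le> inner (u2 - v2) (z - u2) + lam*(g z - g u2)"
  shows "norm (u1 - u2) \<le> norm (v1 - v2)"
proof -
  have "0 \<le> inner (u1 - v1) (u2 - u1) + inner (u2 - v2) (u1 - u2)"
    using c1[of u2] c2[of u1] by (simp add: algebra_simps)
  also have "\<dots> = inner (v1 - v2) (u1 - u2) - inner (u1 - u2) (u1 - u2)"
    by (simp add: inner_diff_left inner_diff_right inner_commute algebra_simps)
  finally have "(norm (u1 - u2))\<^sup>2 \<le> inner (v1 - v2) (u1 - u2)"
    by (simp add: power2_norm_eq_inner)
  also have "\<dots> \<le> norm (v1 - v2) * norm (u1 - u2)" by (rule norm_cauchy_schwarz)
  finally have h: "norm (u1 - u2) * norm (u1 - u2) \<le> norm (v1 - v2) * norm (u1 - u2)"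
    by (simp add: power2_eq_square)
  show ?thesis
  proof (cases "norm (u1 - u2) = 0")
    case True then show ?thesis by simp
  next
    case False
    hence "norm (u1 - u2) > 0" by simp
    with h show ?thesis by (simp add: mult_le_cancel_right)
  qed
qed

lemma mat_bl: "bounded_linear (\<lambda>x. (M::complex^'n^'m) *v x)"
  unfolding linear_conv_bounded_linear[symmetric]
  by (intro linearI) (simp_all add: matrix_vector_right_distrib mv_scaleR)


theorem mainTheorem7:
  fixes A :: "complex^'n^'m" and b :: "complex^'m" and lam :: real
    and g :: "complex^'n \<Rightarrow> real" and xstar :: "complex^'n"
    and p :: "real poly" and y :: "nat \<Rightarrow> complex^'n"
    and \<gamma> \<delta> :: real
  assumes normA: "opnorm A \<le> 1"
    and inj: "inj (\<lambda>x. (adjoint_mat A ** A) *v x)"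
    and lam_pos: "lam > 0"
    and g_convex: "convex_on UNIV g"
    and g_closed: "\<And>c. closed {x. g x \<le> c}"
    and xstar_min: "\<And>x. (1/2) * (norm (A *v xstar - b))\<^sup>2 + lam * g xstar
                        \<le> (1/2) * (norm (A *v x - b))\<^sup>2 + lam * g x"
    and gamma_def: "\<gamma> = opnorm (mat 1 - poly_mat p (adjoint_mat A ** A) ** (adjoint_mat A ** A))"
    and delta_def: "\<delta> = norm ((mat 1 - poly_mat p (adjoint_mat A ** A)) *v
                               (adjoint_mat A *v (A *v xstar - b)))"
    and gamma_lt: "\<gamma> < 1"
    and y_rec: "\<And>k. y (Suc k) = prox lam g
                   (y k - poly_mat p (adjoint_mat A ** A) *v (adjoint_mat A *v (A *v y k - b)))"
  shows "(\<forall>k. norm (y (Suc k) - xstar) \<le> \<gamma> * norm (y k - xstar) + \<delta>)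
         \<and> limsup (\<lambda>k. ereal (norm (y k - xstar))) \<le> ereal (\<delta> / (1 - \<gamma>))"
  
proof -
  let ?As = "adjoint_mat A"
  let ?M = "?As ** A"
  let ?P = "poly_mat p ?M"
  define r where "r = A *v xstar - b"
  have charX: "0 \<le> inner (?As *v r) (z - xstar) + lam*(g z - g xstar)" for z
  proof -
    define d where "d = z - xstar"
    have "0 \<le> inner r (A *v d) + lam*(g (xstar + d) - g xstar)"
    proof (rule min_char[where Q="\<lambda>x. (1/2) * (norm (A *v x - b))\<^sup>2" and C="(1/2)*(norm (A *v d))\<^sup>2", OF g_convex])
      show "0 \<le> lam" using lam_pos by simp
      show "\<And>w. (1/2) * (norm (A *v xstar - b))\<^sup>2 + lam * g xstar \<le> (1/2) * (norm (A *v w - b))\<^sup>2 + lam * g w"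
        by (rule xstar_min)
      fix t :: real
      have eq: "A *v (xstar + t *\<^sub>R d) - b = r + t *\<^sub>R (A *v d)"
        by (simp add: r_def matrix_vector_right_distrib mv_scaleR algebra_simps)
      show "(1/2) * (norm (A *v (xstar + t *\<^sub>R d) - b))\<^sup>2 = (1/2) * (norm (A *v xstar - b))\<^sup>2
        + t * inner r (A *v d) + t^2 * ((1/2)*(norm (A *v d))\<^sup>2)"
        unfolding eq norm_exp r_def[symmetric] by (simp add: algebra_simps)
    qed
    moreover have "inner r (A *v d) = inner (?As *v r) d"
      using adj[of A d r] by (simp add: inner_commute)
    ultimately show ?thesis by (simp add: d_def)
  qed
  have charX': "0 \<le> inner (xstar - (xstar - ?As *v r)) (z - xstar) + lam*(g z - g xstar)" for z
    using charX[of z] by simp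
  have blT1: "bounded_linear (\<lambda>x. (mat 1 - ?P ** ?M) *v x)" by (rule mat_bl)
  have g0: "\<gamma> \<ge> 0" unfolding gamma_def opnorm_def by (rule onorm_pos_le[OF blT1])
  have step: "norm (y (Suc k) - xstar) \<le> \<gamma> * norm (y k - xstar) + \<delta>" for k
  proof -
    define e where "e = y k - xstar"
    define v1 where "v1 = y k - ?P *v (?As *v (A *v y k - b))"
    have "norm (y (Suc k) - xstar) \<le> norm (v1 - (xstar - ?As *v r))"
      unfolding y_rec v1_def
      by (rule nonexp[OF prox_char[OF g_convex lam_pos] charX'])
    also have "v1 - (xstar - ?As *v r) = (mat 1 - ?P ** ?M) *v e + (mat 1 - ?P) *v (?As *v r)"
    proof -
      have "A *v y k - b = A *v e + r" by (simp add: e_def r_def matrix_vector_mult_diff_distrib)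
      hence h: "?P *v (?As *v (A *v y k - b)) = ?P *v (?As *v (A *v e)) + ?P *v (?As *v r)"
        by (simp add: matrix_vector_right_distrib)
      have h2: "(?P ** ?M) *v e = ?P *v (?As *v (A *v e))"
        by (simp add: matrix_vector_mul_assoc)
      show ?thesis
        unfolding v1_def h matrix_vector_mult_diff_rdistrib matrix_vector_mul_lid h2
        by (simp add: e_def algebra_simps)
    qed
    also have "norm \<dots> \<le> norm ((mat 1 - ?P ** ?M) *v e) + norm ((mat 1 - ?P) *v (?As *v r))"
      by (rule norm_triangle_ineq)
    also have "\<dots> \<le> \<gamma> * norm e + \<delta>"
      using onorm[OF blT1, of e] unfolding gamma_def delta_def opnorm_def r_def by simp
    finally show ?thesis by (simp add: e_def)
  qed
  define D where "D = \<delta> / (1 - \<gamma>)"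
  have d0: "\<delta> \<ge> 0" by (simp add: delta_def)
  have Deq: "\<gamma> * D + \<delta> = D" using gamma_lt by (simp add: D_def field_simps)
  have bnd: "norm (y k - xstar) \<le> \<gamma>^k * norm (y 0 - xstar) + D" for k
  proof (induction k)
    case 0 then show ?case using d0 gamma_lt by (simp add: D_def)
  next
    case (Suc k)
    have "norm (y (Suc k) - xstar) \<le> \<gamma> * norm (y k - xstar) + \<delta>" by (rule step)
    also have "\<dots> \<le> \<gamma> * (\<gamma>^k * norm (y 0 - xstar) + D) + \<delta>"
      using Suc g0 by (intro add_right_mono mult_left_mono) auto
    also have "\<dots> = \<gamma>^Suc k * norm (y 0 - xstar) + (\<gamma> * D + \<delta>)" by (simp add: algebra_simps)
    finally show ?case using Deq by simp
  qed
  have lim: "(\<lambda>k. \<gamma>^k * norm (y 0 - xstar) + D) \<longlonglongrightarrow> 0 * norm (y 0 - xstar) + D"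
    by (intro tendsto_intros LIMSEQ_power_zero) (use g0 gamma_lt in auto)
  have "limsup (\<lambda>k. ereal (norm (y k - xstar))) \<le> limsup (\<lambda>k. ereal (\<gamma>^k * norm (y 0 - xstar) + D))"
    by (intro Limsup_mono always_eventually allI) (simp add: bnd)
  also have "\<dots> = ereal D"
    by (rule lim_imp_Limsup) (use lim in \<open>auto simp: lim_ereal\<close>)
  finally show ?thesis using step by (simp add: D_def)
qed

end
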